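(* If $(n,x,y)\in\mathbb Z^3$ satisfies $n\ge 3$, $\max\{|x|,|y|\}\ge 2$ and $\Phi_n(x,y)<7^{\varphi(n)/2}$, then $\max\{|x|,|y|\}=2$.
   Context: For $n\ge 1$, $\phi_n(X)\in\mathbb Z[X]$ denotes the $n$-th cyclotomic polynomial (degree $\varphi(n)$, $\varphi$ Euler's totient function), and the cyclotomic binary form is $\Phi_n(X,Y)=Y^{\varphi(n)}\phi_n(X/Y)$. *)

theory Defs
  imports Complex_Main "HOL-Computational_Algebra.Polynomial" "HOL-Number_Theory.Totient"
begin

definition cyclotomic_poly :: "nat \<Rightarrow> complex poly" where
  "cyclotomic_poly n =
     (\<Prod>k\<in>{k. 1 \<le> k \<and> k \<le> n \<and> coprime k n}. [:- cis (2 * pi * real k / real n), 1:])"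

definition cyclotomic_form :: "nat \<Rightarrow> complex \<Rightarrow> complex \<Rightarrow> complex" where
  "cyclotomic_form n x y =
     (\<Sum>i\<le>totient n. coeff (cyclotomic_poly n) i * x ^ i * y ^ (totient n - i))"

end

theory Submission
  imports Defs "HOL-Number_Theory.Totient" "HOL-Number_Theory.Prime_Powers" "HOL-Analysis.Convex"
begin

definition zeta :: "nat \<Rightarrow> nat \<Rightarrow> complex" where
  "zeta n k = cis (2 * pi * real k / real n)"

definition prim :: "nat \<Rightarrow> nat set" where
  "prim n = {k. 1 \<le> k \<and> k \<le> n \<and> coprime k n}"

lemma finite_prim [simp]: "finite (prim n)"
  unfolding prim_def by (rule finite_subset[of _ "{..n}"]) auto

lemma card_prim: "card (prim n) = totient n"
proof -
  have "prim n = totatives n" unfolding prim_def totatives_def by auto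
  thus ?thesis by (simp add: totient_def)
qed

lemma hom_lemma:
  fixes a :: "'i \<Rightarrow> complex"
  assumes "finite I"
  shows "(\<Sum>i\<le>card I. coeff (\<Prod>j\<in>I. [:- a j, 1:]) i * x ^ i * y ^ (card I - i))
         = (\<Prod>j\<in>I. x - a j * y)"
proof -
  define p where "p = (\<Prod>j\<in>I. [:- a j, 1:])"
  have deg: "degree p = card I" unfolding p_def using assms
    by (subst degree_prod_eq_sum_degree) auto
  have lc: "lead_coeff p = 1" unfolding p_def by (simp add: lead_coeff_prod)
  show ?thesis
  proof (cases "y = 0")
    case True
    have "(\<Sum>i\<le>card I. coeff p i * x ^ i * y ^ (card I - i)) = coeff p (card I) * x ^ card I"
      using True by (subst sum.remove[of _ "card I"]) (auto intro!: sum.neutral)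
    also have "\<dots> = x ^ card I" using lc deg by simp
    finally show ?thesis using True assms by (simp add: p_def)
  next
    case False
    have "(\<Sum>i\<le>card I. coeff p i * x ^ i * y ^ (card I - i))
        = (\<Sum>i\<le>card I. y ^ card I * (coeff p i * (x/y) ^ i))"
      using False by (intro sum.cong refl) (auto simp: power_divide power_diff field_simps)
    also have "\<dots> = y ^ card I * poly p (x / y)"
      by (simp add: poly_altdef deg sum_distrib_left)
    also have "\<dots> = (\<Prod>j\<in>I. y * (x / y - a j))"
      by (simp add: p_def poly_prod prod.distrib)
    also have "\<dots> = (\<Prod>j\<in>I. x - a j * y)"
      using False by (intro prod.cong refl) (simp add: field_simps)
    finally show ?thesis by (simp add: p_def)
  qed
qed

lemma form_prod:
  "cyclotomic_form n x y = (\<Prod>k\<in>prim n. x - zeta n k * y)"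
proof -
  have "cyclotomic_form n x y = (\<Sum>i\<le>card (prim n). coeff (\<Prod>k\<in>prim n. [:- zeta n k, 1:]) i * x ^ i * y ^ (card (prim n) - i))"
    unfolding cyclotomic_form_def card_prim by (simp add: cyclotomic_poly_def zeta_def prim_def)
  also have "\<dots> = (\<Prod>k\<in>prim n. x - zeta n k * y)" by (rule hom_lemma) simp
  finally show ?thesis .
qed


definition S :: "nat \<Rightarrow> nat set" where
  "S n = {k\<in>prim n. 2 * k < n}"

lemma finite_S [simp]: "finite (S n)" unfolding S_def by simp

lemma zeta_neg: "n > 0 \<Longrightarrow> k \<le> n \<Longrightarrow> zeta n (n - k) = cnj (zeta n k)"
proof -
  assume n: "n > 0" and k: "k \<le> n"
  have "2 * pi * real (n - k) / real n = 2 * pi - 2 * pi * real k / real n"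
    using n k by (simp add: of_nat_diff field_simps)
  hence "zeta n (n - k) = cis (2 * pi - 2 * pi * real k / real n)"
    unfolding zeta_def by simp
  also have "\<dots> = cis (- (2 * pi * real k / real n))"
    by (simp add: complex_eq_iff cos_diff sin_diff)
  finally show ?thesis by (simp add: zeta_def cis_cnj)
qed

lemma prim_split:
  assumes "n \<ge> 3"
  shows "prim n = S n \<union> (\<lambda>k. n - k) ` S n" "S n \<inter> (\<lambda>k. n - k) ` S n = {}"
        "inj_on (\<lambda>k. n - k) (S n)"
proof -
  have key: "2 * k \<noteq> n" if "k \<in> prim n" for k
  proof
    assume h: "2 * k = n"
    have "coprime k (2 * k)" using that h unfolding prim_def by auto
    hence "coprime k k" using coprime_mult_right_iff by blast
    hence "k = 1" by simp
    with h assms show False by simp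
  qed
  have cop: "coprime (n - k) n" if "coprime k n" "k \<le> n" for k
    using that by (metis coprime_iff_gcd_eq_1 gcd_diff2_nat)
  have kn: "k < n" if "k \<in> prim n" for k
  proof -
    have "k \<le> n" "coprime k n" using that unfolding prim_def by auto
    moreover have "k \<noteq> n"
    proof
      assume "k = n"
      with \<open>coprime k n\<close> have "n = 1" by simp
      with assms show False by simp
    qed
    ultimately show ?thesis by simp
  qed
  show "prim n = S n \<union> (\<lambda>k. n - k) ` S n"
  proof (intro equalityI subsetI)
    fix k assume k: "k \<in> prim n"
    show "k \<in> S n \<union> (\<lambda>k. n - k) ` S n"
    proof (cases "2 * k < n")
      case True thus ?thesis using k unfolding S_def by auto
    next
      case False
      with key[OF k] have "2 * k > n" by simp
      moreover have "n - k \<in> prim n"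
      proof -
        have "k \<le> n" "coprime k n" using k unfolding prim_def by auto
        hence "coprime (n - k) n" by (intro cop)
        thus ?thesis using kn[OF k] \<open>k \<le> n\<close> unfolding prim_def by auto
      qed
      ultimately have "n - k \<in> S n" using kn[OF k] unfolding S_def by auto
      moreover have "k = n - (n - k)" using kn[OF k] by simp
      ultimately show ?thesis by blast
    qed
  next
    fix k assume "k \<in> S n \<union> (\<lambda>k. n - k) ` S n"
    then consider "k \<in> S n" | j where "j \<in> S n" "k = n - j" by blast
    thus "k \<in> prim n"
    proof cases
      case 2
      hence "j \<in> prim n" "2 * j < n" unfolding S_def by auto
      have "j \<le> n" "coprime j n" "1 \<le> j" using \<open>j \<in> prim n\<close> unfolding prim_def by auto
      hence "coprime (n - j) n" by (intro cop)
      moreover have "1 \<le> n - j" "n - j \<le> n" using \<open>2 * j < n\<close> by auto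
      ultimately show ?thesis using 2 unfolding prim_def by auto
    qed (auto simp: S_def)
  qed
  show "S n \<inter> (\<lambda>k. n - k) ` S n = {}" unfolding S_def by auto
  show "inj_on (\<lambda>k. n - k) (S n)" unfolding S_def inj_on_def by auto
qed

lemma card_S: assumes "n \<ge> 3" shows "totient n = 2 * card (S n)"
proof -
  have "totient n = card (S n \<union> (\<lambda>k. n - k) ` S n)" using prim_split(1)[OF assms] card_prim by metis
  also have "\<dots> = card (S n) + card ((\<lambda>k. n - k) ` S n)"
    using prim_split[OF assms] by (intro card_Un_disjoint) auto
  also have "card ((\<lambda>k. n - k) ` S n) = card (S n)" using prim_split[OF assms] by (simp add: card_image)
  finally show ?thesis by simp
qed

lemma pair_prod:
  fixes a b :: real
  assumes "n \<ge> 3"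
  shows "(\<Prod>k\<in>prim n. of_real a - zeta n k * of_real b) =
         of_real (\<Prod>k\<in>S n. (cmod (of_real a - zeta n k * of_real b))\<^sup>2)"
proof -
  let ?f = "\<lambda>k. of_real a - zeta n k * of_real b"
  have "(\<Prod>k\<in>prim n. ?f k) = (\<Prod>k\<in>S n. ?f k) * (\<Prod>k\<in>(\<lambda>k. n - k) ` S n. ?f k)"
    using prim_split[OF assms] by (simp add: prod.union_disjoint)
  also have "(\<Prod>k\<in>(\<lambda>k. n - k) ` S n. ?f k) = (\<Prod>k\<in>S n. ?f (n - k))"
    using prim_split[OF assms] by (simp add: prod.reindex)
  also have "\<dots> = (\<Prod>k\<in>S n. cnj (?f k))"
    using assms by (intro prod.cong refl) (auto simp: S_def prim_def zeta_neg)
  also have "(\<Prod>k\<in>S n. ?f k) * \<dots> = (\<Prod>k\<in>S n. ?f k * cnj (?f k))"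
    by (simp add: prod.distrib)
  also have "\<dots> = (\<Prod>k\<in>S n. of_real ((cmod (?f k))\<^sup>2))"
    by (intro prod.cong refl) (rule complex_norm_square[symmetric])
  finally show ?thesis by simp
qed



lemma prod_lower:
  fixes A B :: real and u :: "'i \<Rightarrow> real"
  assumes "finite I" "A \<ge> 0" "B \<ge> 0" "A + B > 0" "\<And>k. k \<in> I \<Longrightarrow> u k > 0" "prod u I \<ge> 1"
  shows "(A + B) ^ card I \<le> (\<Prod>k\<in>I. A + B * u k)"
proof -
  define w where "w = B / (A + B)"
  have w: "0 \<le> w" "w \<le> 1" using assms by (auto simp: w_def field_simps)
  have one: "(A + B) * u k powr w \<le> A + B * u k" if "k \<in> I" for k
  proof -
    have "1 powr (A/(A+B)) * u k powr w \<le> (A/(A+B)) * 1 + w * u k"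
    proof (rule Youngs_inequality_0)
      show "0 \<le> A / (A + B)" "0 \<le> w" using assms w by auto
      show "A / (A + B) + w = 1" using assms by (simp add: w_def add_divide_distrib[symmetric])
      show "(0::real) < 1" by simp
      show "0 < u k" using assms that by auto
    qed
    hence "u k powr w \<le> A/(A+B) + w * u k" by simp
    hence "(A + B) * u k powr w \<le> (A + B) * (A/(A+B) + w * u k)"
      using assms by (intro mult_left_mono) auto
    also have "\<dots> = A + B * u k"
    proof -
      have "A + B \<noteq> 0" using assms by simp
      thus ?thesis by (simp add: w_def distrib_left)
    qed
    finally show ?thesis .
  qed
  have "(A + B) ^ card I \<le> (A + B) ^ card I * (prod u I) powr w"
  proof -
    have "1 \<le> prod u I powr w" using assms w by (intro ge_one_powr_ge_zero) auto
    moreover have "0 \<le> (A + B) ^ card I" using assms by simp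
    ultimately show ?thesis by (metis mult_left_mono mult.right_neutral)
  qed
  also have "\<dots> = (\<Prod>k\<in>I. (A + B) * u k powr w)"
    by (simp add: prod_powr_distrib prod.distrib)
  also have "\<dots> \<le> (\<Prod>k\<in>I. A + B * u k)"
    using one assms by (intro prod_mono conjI) auto
  finally show ?thesis .
qed

lemma roots_poly:
  assumes "n > 0"
  shows "(\<Prod>k\<in>{1..n}. [:- zeta n k, 1:]) = monom 1 n - 1"
proof -
  have bij: "bij_betw (zeta n) {..<n} {z. z ^ n = 1}"
    using bij_betw_roots_unity[OF assms] unfolding zeta_def by simp
  have z0: "zeta n 0 = 1" by (simp add: zeta_def)
  have zn: "zeta n n = 1" using assms by (simp add: zeta_def complex_eq_iff)
  have eq: "(\<Prod>k\<in>{1..n}. g (zeta n k)) = (\<Prod>k\<in>{..<n}. g (zeta n k))" for g :: "complex \<Rightarrow> complex poly"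
  proof -
    have "{1..n} = insert n {1..<n}" "{..<n} = insert 0 {1..<n}" using assms by auto
    thus ?thesis using z0 zn by simp
  qed
  define Q where "Q = (\<Prod>k\<in>{1..n}. [:- zeta n k, 1:])"
  have Q: "Q = (\<Prod>z\<in>{z. z ^ n = 1}. [:- z, 1:])"
    unfolding Q_def eq[of "\<lambda>z. [:- z, 1:]"] using prod.reindex_bij_betw[OF bij, of "\<lambda>z. [:- z, 1:]"] by simp
  have degQ: "degree Q = n"
    unfolding Q by (subst degree_prod_eq_sum_degree) (auto simp: card_roots_unity_eq assms)
  have lcQ: "lead_coeff Q = 1" unfolding Q by (simp add: lead_coeff_prod)
  have degM: "degree (monom (1::complex) n - 1) \<le> n"
    by (rule degree_diff_le) (auto simp: degree_monom_le)
  show ?thesis unfolding Q_def[symmetric]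
  proof (rule poly_eqI_degree_lead_coeff[where n = n and A = "{z. z ^ n = 1}"])
    show "coeff Q n = coeff (monom 1 n - 1) n" using lcQ degQ assms by simp
    show "n \<le> card {z::complex. z ^ n = 1}" by (simp add: card_roots_unity_eq assms)
    show "degree Q \<le> n" using degQ by simp
    show "degree (monom (1::complex) n - 1) \<le> n" using degM by simp
    fix z :: complex assume "z \<in> {z. z ^ n = 1}"
    hence z: "z ^ n = 1" by simp
    have "poly Q z = 0" unfolding Q poly_prod
      by (rule prod_zero) (use z assms finite_roots_unity in auto)
    thus "poly Q z = poly (monom 1 n - 1) z" using z by (simp add: poly_monom)
  qed
qed



lemma zeta_div: assumes "d dvd n" "n > 0"
  shows "zeta n (j * (n div d)) = zeta d j"
proof -
  have d: "d > 0" using assms by auto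
  have "real (n div d) = real n / real d" using assms by (simp add: real_of_nat_div)
  hence "2 * pi * real (j * (n div d)) / real n = 2 * pi * real j / real d"
    using d assms by (simp add: field_simps)
  thus ?thesis by (simp add: zeta_def)
qed

lemma gcd_mult_div: fixes d n j :: nat assumes "d dvd n" "n > 0" "coprime j d"
  shows "gcd (j * (n div d)) n = n div d"
proof -
  obtain m where m: "n = d * m" using assms by auto
  have d: "d > 0" using assms(2) m by (cases "d = 0") auto
  have nd: "n div d = m" using m d by simp
  have "gcd (j * m) (d * m) = m * gcd j d" by (simp add: gcd_mult_distrib_nat mult.commute)
  also have "gcd j d = 1" using assms by simp
  finally show ?thesis using m nd by simp
qed

lemma grouping:
  assumes "n > 0"
  shows "(\<Prod>k\<in>{1..n}. f (zeta n k)) = (\<Prod>d\<in>{d. d dvd n}. \<Prod>j\<in>prim d. f (zeta d j))"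
proof -
  have fin: "finite {d. d dvd n}" using assms by simp
  have "(\<Prod>d\<in>{d. d dvd n}. \<Prod>j\<in>prim d. f (zeta d j)) =
        (\<Prod>p\<in>Sigma {d. d dvd n} prim. f (zeta (fst p) (snd p)))"
    using fin by (subst prod.Sigma) (auto simp: split_beta)
  also have "\<dots> = (\<Prod>k\<in>{1..n}. f (zeta n k))"
  proof (rule prod.reindex_bij_witness[where j = "\<lambda>p. snd p * (n div fst p)"
                                       and i = "\<lambda>k. (n div gcd k n, k div gcd k n)"])
    fix p assume p: "p \<in> Sigma {d. d dvd n} prim"
    obtain d j where pd: "p = (d, j)" by (cases p)
    have dn: "d dvd n" and j: "1 \<le> j" "j \<le> d" "coprime j d" using p pd unfolding prim_def by auto
    have d: "d > 0" using dn assms by auto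
    have g: "gcd (j * (n div d)) n = n div d" using gcd_mult_div[OF dn assms j(3)] .
    have nd: "n div d > 0" using dn d assms by (simp add: div_greater_zero_iff dvd_imp_le)
    show "(n div gcd (snd p * (n div fst p)) n, snd p * (n div fst p) div gcd (snd p * (n div fst p)) n) = p"
      using g nd dn d by (auto simp: pd div_div_eq_right)
    show "snd p * (n div fst p) \<in> {1..n}"
    proof -
      have "j * (n div d) \<le> d * (n div d)" using j by simp
      also have "\<dots> = n" using dn by simp
      finally show ?thesis using j nd by (simp add: pd)
    qed
    show "f (zeta n (snd p * (n div fst p))) = f (zeta (fst p) (snd p))"
      using zeta_div[OF dn assms] by (simp add: pd)
  next
    fix k assume k: "k \<in> {1..n}"
    define g where "g = gcd k n"
    have g0: "g > 0" using k by (simp add: g_def)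
    have gk: "g dvd k" "g dvd n" by (auto simp: g_def)
    show "snd (n div gcd k n, k div gcd k n) * (n div fst (n div gcd k n, k div gcd k n)) = k"
      using gk g0 assms unfolding g_def[symmetric] by (auto simp: div_div_eq_right elim!: dvdE)
    have "coprime (k div g) (n div g)" unfolding g_def using k by (intro div_gcd_coprime) auto
    moreover have "1 \<le> k div g" using k gk g0 by (auto simp: dvd_imp_le div_greater_zero_iff)
    moreover have "k div g \<le> n div g" using k by (simp add: div_le_mono)
    moreover have "n div g dvd n" using gk by (auto elim!: dvdE)
    ultimately show "(n div gcd k n, k div gcd k n) \<in> Sigma {d. d dvd n} prim"
      unfolding g_def[symmetric] prim_def by auto
  qed
  finally show ?thesis ..
qed



definition G :: "nat \<Rightarrow> complex poly" where "G n = (\<Sum>i<n. monom 1 i)"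
definition H :: "nat \<Rightarrow> complex poly" where "H m = (\<Sum>j<m. monom 1 (2 * j))"

lemma poly_G: "poly (G n) x = (\<Sum>i<n. x ^ i)"
  by (simp add: G_def poly_sum poly_monom)

lemma poly_H: "poly (H m) x = (\<Sum>j<m. x ^ (2 * j))"
  by (simp add: H_def poly_sum poly_monom)

lemma G_eq: "[:-1, 1:] * G n = monom 1 n - 1"
proof (rule poly_eq_poly_eq_iff[THEN iffD1], rule ext)
  fix x :: complex
  have "poly ([:-1, 1:] * G n) x = (x - 1) * (\<Sum>i<n. x ^ i)"
    by (simp only: poly_mult poly_G) simp
  also have "\<dots> = x ^ n - 1" by (rule power_diff_1_eq[symmetric])
  finally show "poly ([:-1, 1:] * G n) x = poly (monom 1 n - 1) x" by (simp add: poly_monom)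
qed

lemma H_sum: "(\<Sum>i<2 * m. x ^ i) = (1 + x) * (\<Sum>j<m. (x::complex) ^ (2 * j))"
  by (induction m) (auto simp: algebra_simps)

lemma H_eq: "G (2 * m) = [:1, 1:] * H m"
proof (rule poly_eq_poly_eq_iff[THEN iffD1], rule ext)
  fix x :: complex
  have "poly ([:1, 1:] * H m) x = (1 + x) * (\<Sum>j<m. x ^ (2 * j))"
    by (simp only: poly_mult poly_H) simp
  thus "poly (G (2 * m)) x = poly ([:1, 1:] * H m) x" by (simp add: poly_G H_sum)
qed

lemma zeta_ne_1: assumes "0 < k" "k < n" shows "zeta n k \<noteq> 1"
proof
  assume "zeta n k = 1"
  hence "zeta n k = zeta n 0" by (simp add: zeta_def)
  moreover have "inj_on (zeta n) {..<n}"
    using bij_betw_roots_unity[of n] assms unfolding zeta_def bij_betw_def by simp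
  ultimately show False using assms by (auto dest: inj_onD)
qed

lemma prod_1_n: assumes "n > 0"
  shows "(\<Prod>k\<in>{1..n}. [:- zeta n k, 1:]) = [:-1, 1:] * (\<Prod>k\<in>{1..<n}. [:- zeta n k, 1:])"
proof -
  have "{1..n} = insert n {1..<n}" using assms by auto
  moreover have "zeta n n = 1" using assms by (simp add: zeta_def complex_eq_iff)
  ultimately show ?thesis by simp
qed

lemma prod_lt_n: assumes "n > 0"
  shows "(\<Prod>k\<in>{1..<n}. [:- zeta n k, 1:]) = G n"
proof -
  have "[:-1, 1:] * (\<Prod>k\<in>{1..<n}. [:- zeta n k, 1:]) = [:-1, 1:] * G n"
    using roots_poly[OF assms] prod_1_n[OF assms] G_eq by metis
  moreover have nz: "[:-1, 1::complex:] \<noteq> 0" by simp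
  ultimately show ?thesis by (metis mult_left_cancel)
qed

lemma eval1: assumes "n > 0" shows "(\<Prod>k\<in>{1..<n}. 1 - zeta n k) = of_nat n"
proof -
  have "poly (\<Prod>k\<in>{1..<n}. [:- zeta n k, 1:]) 1 = poly (G n) 1" using prod_lt_n[OF assms] by simp
  thus ?thesis by (simp add: poly_prod poly_G)
qed

lemma eval_odd: assumes "odd n" shows "(\<Prod>k\<in>{1..<n}. 1 + zeta n k) = 1"
proof -
  have n: "n > 0" using assms by (rule odd_pos)
  obtain m where m: "n = Suc (2 * m)" using assms by (metis oddE Suc_eq_plus1)
  have "poly (\<Prod>k\<in>{1..<n}. [:- zeta n k, 1:]) (-1) = poly (G n) (-1)" using prod_lt_n[OF n] by simp
  also have "\<dots> = 1" unfolding m poly_G by (simp add: H_sum)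
  finally have "(\<Prod>k\<in>{1..<n}. - zeta n k - 1) = 1" by (simp add: poly_prod)
  moreover have "(\<Prod>k\<in>{1..<n}. - zeta n k - 1) = (-1) ^ card {1..<n} * (\<Prod>k\<in>{1..<n}. 1 + zeta n k)"
    by (subst prod_constant[symmetric], subst prod.distrib[symmetric]) (auto intro!: prod.cong)
  moreover have "even (card {1..<n})" using m by simp
  ultimately show ?thesis by simp
qed

lemma eval_even: assumes "even n" "n > 0"
  shows "(\<Prod>k\<in>{1..<n} - {n div 2}. 1 + zeta n k) = of_nat (n div 2)"
proof -
  obtain m where m: "n = 2 * m" using assms by blast
  have m0: "m > 0" using m assms by simp
  have zm: "zeta n m = -1" using m m0 by (simp add: zeta_def complex_eq_iff)
  have mem: "m \<in> {1..<n}" using m m0 by auto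
  have "(\<Prod>k\<in>{1..<n}. [:- zeta n k, 1:]) = [:- zeta n m, 1:] * (\<Prod>k\<in>{1..<n} - {m}. [:- zeta n k, 1:])"
    by (rule prod.remove[OF _ mem]) simp
  hence "[:1, 1:] * (\<Prod>k\<in>{1..<n} - {m}. [:- zeta n k, 1:]) = [:1, 1:] * H m"
    using prod_lt_n[of n] assms m H_eq zm by (simp add: add.commute)
  moreover have nz: "[:1, 1::complex:] \<noteq> 0" by simp
  ultimately have "(\<Prod>k\<in>{1..<n} - {m}. [:- zeta n k, 1:]) = H m" by (metis mult_left_cancel)
  hence "poly (\<Prod>k\<in>{1..<n} - {m}. [:- zeta n k, 1:]) (-1) = of_nat m" by (simp add: poly_H)
  hence "(\<Prod>k\<in>{1..<n} - {m}. - zeta n k - 1) = of_nat m" by (simp add: poly_prod)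
  moreover have "(\<Prod>k\<in>{1..<n} - {m}. - zeta n k - 1) = (-1) ^ card ({1..<n} - {m}) * (\<Prod>k\<in>{1..<n} - {m}. 1 + zeta n k)"
    by (subst prod_constant[symmetric], subst prod.distrib[symmetric]) (auto intro!: prod.cong)
  moreover have "card ({1..<n} - {m}) = 2 * m - 2" using m m0 by simp
  ultimately show ?thesis using m by simp
qed



lemma divisor_eq:
  fixes F Gf :: "nat \<Rightarrow> real"
  assumes "\<And>n. n > 0 \<Longrightarrow> (\<Sum>d | d dvd n. F d) = (\<Sum>d | d dvd n. Gf d)"
  shows "n > 0 \<Longrightarrow> F n = Gf n"
proof (induction n rule: less_induct)
  case (less n)
  have fin: "finite {d. d dvd n}" using less.prems by simp
  have mem: "n \<in> {d. d dvd n}" by simp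
  have rest: "(\<Sum>d\<in>{d. d dvd n} - {n}. F d) = (\<Sum>d\<in>{d. d dvd n} - {n}. Gf d)"
  proof (rule sum.cong[OF refl])
    fix d assume "d \<in> {d. d dvd n} - {n}"
    hence "d dvd n" "d \<noteq> n" by auto
    hence "d < n" "d > 0" using less.prems dvd_imp_le[of d n] dvd_pos_nat[of n d] by auto
    thus "F d = Gf d" by (intro less.IH)
  qed
  have "F n + (\<Sum>d\<in>{d. d dvd n} - {n}. F d) = Gf n + (\<Sum>d\<in>{d. d dvd n} - {n}. Gf d)"
    using assms[OF less.prems] sum.remove[OF fin mem, of F] sum.remove[OF fin mem, of Gf] by simp
  with rest show ?case by simp
qed

lemma zeta_pow: "n > 0 \<Longrightarrow> zeta n k ^ n = 1"
proof -
  assume n: "n > 0"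
  have "zeta n k ^ n = cis (2 * pi) ^ k"
    using n by (simp add: zeta_def DeMoivre mult_ac)
  also have "cis (2 * pi) = 1" by (simp add: complex_eq_iff)
  finally show ?thesis by simp
qed

lemma zeta_n: "n > 0 \<Longrightarrow> zeta n n = 1"
  by (simp add: zeta_def complex_eq_iff)

lemma zeta_neg1: assumes "zeta n k = -1" "0 < k" "k \<le> n" shows "n = 2 * k"
proof -
  have n: "n > 0" using assms by simp
  have "even n"
  proof (rule ccontr)
    assume "odd n"
    hence "(-1::complex) ^ n = -1" by simp
    with zeta_pow[OF n, of k] assms(1) show False by simp
  qed
  then obtain m where m: "n = 2 * m" by blast
  have m0: "m > 0" using m n by simp
  have zm: "zeta n m = -1" using m m0 by (simp add: zeta_def complex_eq_iff)
  have kn: "k \<noteq> n" using zeta_n[OF n] assms(1) by auto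
  have "inj_on (zeta n) {..<n}"
    using bij_betw_roots_unity[of n] n unfolding zeta_def bij_betw_def by simp
  moreover have "k \<in> {..<n}" "m \<in> {..<n}" using kn assms m m0 by auto
  ultimately have "k = m" using zm assms(1) unfolding inj_on_def by force
  thus ?thesis using m by simp
qed

lemma prim_lt: assumes "j \<in> prim n" "n \<ge> 2" shows "0 < j" "j < n"
proof -
  have "1 \<le> j" "j \<le> n" "coprime j n" using assms unfolding prim_def by auto
  moreover have "j \<noteq> n"
  proof
    assume "j = n"
    with \<open>coprime j n\<close> have "n = 1" by simp
    with assms show False by simp
  qed
  ultimately show "0 < j" "j < n" by auto
qed

definition f1 :: "complex \<Rightarrow> complex" where "f1 z = (if z = 1 then 1 else 1 - z)"
definition f2 :: "complex \<Rightarrow> complex" where "f2 z = (if z = -1 then 1 else 1 + z)"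
definition Lp :: "nat \<Rightarrow> complex" where "Lp d = (\<Prod>j\<in>prim d. f1 (zeta d j))"
definition Mp :: "nat \<Rightarrow> complex" where "Mp d = (\<Prod>j\<in>prim d. f2 (zeta d j))"

lemma Lp_prod: assumes "n > 0" shows "(\<Prod>d\<in>{d. d dvd n}. Lp d) = of_nat n"
proof -
  have "(\<Prod>d\<in>{d. d dvd n}. Lp d) = (\<Prod>k\<in>{1..n}. f1 (zeta n k))"
    unfolding Lp_def by (rule grouping[OF assms, symmetric])
  also have "{1..n} = insert n {1..<n}" using assms by auto
  also have "(\<Prod>k\<in>insert n {1..<n}. f1 (zeta n k)) = (\<Prod>k\<in>{1..<n}. 1 - zeta n k)"
  proof -
    have "f1 (zeta n n) = 1" using zeta_n[OF assms] by (simp add: f1_def)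
    moreover have "(\<Prod>k\<in>{1..<n}. f1 (zeta n k)) = (\<Prod>k\<in>{1..<n}. 1 - zeta n k)"
    proof (intro prod.cong refl)
      fix k assume "k \<in> {1..<n}"
      hence "zeta n k \<noteq> 1" by (intro zeta_ne_1) auto
      thus "f1 (zeta n k) = 1 - zeta n k" by (simp add: f1_def)
    qed
    ultimately show ?thesis by simp
  qed
  also have "\<dots> = of_nat n" by (rule eval1[OF assms])
  finally show ?thesis .
qed

lemma Mp_prod: assumes "n > 0"
  shows "(\<Prod>d\<in>{d. d dvd n}. Mp d) = (if even n then of_nat n else 2)"
proof -
  have "(\<Prod>d\<in>{d. d dvd n}. Mp d) = (\<Prod>k\<in>{1..n}. f2 (zeta n k))"
    unfolding Mp_def by (rule grouping[OF assms, symmetric])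
  also have "{1..n} = insert n {1..<n}" using assms by auto
  also have "(\<Prod>k\<in>insert n {1..<n}. f2 (zeta n k)) = 2 * (\<Prod>k\<in>{1..<n}. f2 (zeta n k))"
    using zeta_n[OF assms] by (simp add: f2_def)
  also have "\<dots> = (if even n then of_nat n else 2)"
  proof (cases "even n")
    case False
    have "(\<Prod>k\<in>{1..<n}. f2 (zeta n k)) = (\<Prod>k\<in>{1..<n}. 1 + zeta n k)"
    proof (intro prod.cong refl)
      fix k assume k: "k \<in> {1..<n}"
      have "zeta n k \<noteq> -1"
      proof
        assume "zeta n k = -1"
        hence "n = 2 * k" using k by (intro zeta_neg1) auto
        with False show False by simp
      qed
      thus "f2 (zeta n k) = 1 + zeta n k" by (simp add: f2_def)
    qed
    also have "\<dots> = 1" using False by (rule eval_odd)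
    finally show ?thesis using False by simp
  next
    case True
    have mem: "n div 2 \<in> {1..<n}" using True assms by auto
    have zm: "zeta n (n div 2) = -1" using True assms by (auto simp: zeta_def complex_eq_iff)
    have "(\<Prod>k\<in>{1..<n}. f2 (zeta n k)) = f2 (zeta n (n div 2)) * (\<Prod>k\<in>{1..<n} - {n div 2}. f2 (zeta n k))"
      by (rule prod.remove[OF _ mem]) simp
    also have "f2 (zeta n (n div 2)) = 1" using zm by (simp add: f2_def)
    also have "(\<Prod>k\<in>{1..<n} - {n div 2}. f2 (zeta n k)) = (\<Prod>k\<in>{1..<n} - {n div 2}. 1 + zeta n k)"
    proof (intro prod.cong refl)
      fix k assume k: "k \<in> {1..<n} - {n div 2}"
      have "zeta n k \<noteq> -1"
      proof
        assume "zeta n k = -1"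
        hence "n = 2 * k" using k by (intro zeta_neg1) auto
        with k show False by simp
      qed
      thus "f2 (zeta n k) = 1 + zeta n k" by (simp add: f2_def)
    qed
    also have "\<dots> = of_nat (n div 2)" using True assms by (rule eval_even)
    finally have "(\<Prod>k\<in>{1..<n}. f2 (zeta n k)) = of_nat (n div 2)" by simp
    moreover have "2 * (of_nat (n div 2) :: complex) = of_nat (2 * (n div 2))" by simp
    moreover have "2 * (n div 2) = n" using True by simp
    ultimately show ?thesis using True by simp
  qed
  finally show ?thesis .
qed



lemma Lp_nz: assumes "d > 0" shows "Lp d \<noteq> 0"
proof
  assume "Lp d = 0"
  hence "(\<Prod>e\<in>{e. e dvd d}. Lp e) = 0" using assms by (intro prod_zero) (auto intro!: exI[of _ d])
  with Lp_prod[OF assms] assms show False by simp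
qed

lemma Mp_nz: assumes "d > 0" shows "Mp d \<noteq> 0"
proof
  assume "Mp d = 0"
  hence "(\<Prod>e\<in>{e. e dvd d}. Mp e) = 0" using assms by (intro prod_zero) (auto intro!: exI[of _ d])
  with Mp_prod[OF assms] assms show False by (simp split: if_splits)
qed

lemma sum_ln_cmod:
  assumes "finite A" "\<And>d. d \<in> A \<Longrightarrow> P d \<noteq> 0"
  shows "(\<Sum>d\<in>A. ln (cmod (P d))) = ln (cmod (\<Prod>d\<in>A. P d))"
proof -
  have "(\<Sum>d\<in>A. ln (cmod (P d))) = ln (\<Prod>d\<in>A. cmod (P d))"
    using assms by (subst ln_prod) auto
  also have "(\<Prod>d\<in>A. cmod (P d)) = cmod (\<Prod>d\<in>A. P d)" by (rule prod_norm)
  finally show ?thesis .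
qed

lemma Lp_ln: assumes "n > 0" shows "ln (cmod (Lp n)) = mangoldt n"
proof (rule divisor_eq[OF _ assms])
  fix n :: nat assume n: "n > 0"
  have "(\<Sum>d | d dvd n. ln (cmod (Lp d))) = ln (cmod (\<Prod>d | d dvd n. Lp d))"
    using n Lp_nz by (intro sum_ln_cmod) (auto intro: dvd_pos_nat)
  also have "\<dots> = ln (real n)" using Lp_prod[OF n] by simp
  also have "\<dots> = (\<Sum>d | d dvd n. mangoldt d)" using n by (simp add: mangoldt_sum)
  finally show "(\<Sum>d | d dvd n. ln (cmod (Lp d))) = (\<Sum>d | d dvd n. mangoldt d)" .
qed

definition Gm :: "nat \<Rightarrow> real" where
  "Gm d = (if d = 1 then ln 2 else 0) + (if even d then mangoldt (d div 2) else 0)"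

lemma Gm_sum: assumes "n > 0"
  shows "(\<Sum>d | d dvd n. Gm d) = (if even n then ln (real n) else ln 2)"
proof -
  have fin: "finite {d. d dvd n}" using assms by simp
  have s1: "(\<Sum>d | d dvd n. (if d = 1 then ln 2 else 0 :: real)) = ln 2"
    using fin by (subst sum.delta) auto
  have s2: "(\<Sum>d | d dvd n. (if even d then mangoldt (d div 2) else 0 :: real)) =
            (if even n then ln (real (n div 2)) else 0)"
  proof (cases "even n")
    case False
    have "(\<Sum>d | d dvd n. (if even d then mangoldt (d div 2) else 0 :: real)) = 0"
    proof (intro sum.neutral ballI)
      fix d assume "d \<in> {d. d dvd n}"
      hence "odd d" using False by (auto dest: dvd_trans)
      thus "(if even d then mangoldt (d div 2) else 0 :: real) = 0" by simp
    qed
    thus ?thesis using False by simp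
  next
    case True
    have "(\<Sum>d | d dvd n. (if even d then mangoldt (d div 2) else 0 :: real)) =
          (\<Sum>d\<in>{d\<in>{d. d dvd n}. even d}. mangoldt (d div 2))"
      using fin by (simp add: sum.inter_filter[symmetric])
    also have "\<dots> = (\<Sum>e | e dvd n div 2. mangoldt e)"
    proof (rule sum.reindex_bij_witness[where i = "\<lambda>e. 2 * e" and j = "\<lambda>d. d div 2"])
      fix d assume d: "d \<in> {d\<in>{d. d dvd n}. even d}"
      show "2 * (d div 2) = d" using d by auto
      show "d div 2 \<in> {e. e dvd n div 2}" using d True by (auto elim!: evenE)
      show "mangoldt (d div 2) = (mangoldt (d div 2) :: real)" ..
    next
      fix e assume e: "e \<in> {e. e dvd n div 2}"
      show "2 * e div 2 = e" by simp
      show "2 * e \<in> {d\<in>{d. d dvd n}. even d}" using e True by (auto elim!: evenE)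
    qed
    also have "\<dots> = ln (real (n div 2))" using True assms by (subst mangoldt_sum) auto
    finally show ?thesis using True by simp
  qed
  have "(\<Sum>d | d dvd n. Gm d) = ln 2 + (if even n then ln (real (n div 2)) else 0)"
    unfolding Gm_def sum.distrib s1 s2 ..
  also have "\<dots> = (if even n then ln (real n) else ln 2)"
  proof (cases "even n")
    case True
    then obtain m where m: "n = 2 * m" by blast
    have "m > 0" using m assms by simp
    hence "ln 2 + ln (real m) = ln (2 * real m)" by (simp add: ln_mult)
    thus ?thesis using m by simp
  qed simp
  finally show ?thesis .
qed

lemma Mp_ln: assumes "n > 0" shows "ln (cmod (Mp n)) = Gm n"
proof (rule divisor_eq[OF _ assms])
  fix n :: nat assume n: "n > 0"
  have "(\<Sum>d | d dvd n. ln (cmod (Mp d))) = ln (cmod (\<Prod>d | d dvd n. Mp d))"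
    using n Mp_nz by (intro sum_ln_cmod) (auto intro: dvd_pos_nat)
  also have "\<dots> = (if even n then ln (real n) else ln 2)" using Mp_prod[OF n] by simp
  also have "\<dots> = (\<Sum>d | d dvd n. Gm d)" using n by (simp add: Gm_sum)
  finally show "(\<Sum>d | d dvd n. ln (cmod (Mp d))) = (\<Sum>d | d dvd n. Gm d)" .
qed

lemma exp_ln_cmod: "z \<noteq> 0 \<Longrightarrow> ln (cmod z) \<ge> 0 \<Longrightarrow> cmod z \<ge> 1"
  by (metis ln_ge_zero_iff zero_less_norm_iff)

lemma L_ge1: assumes "n \<ge> 2" shows "1 \<le> cmod (\<Prod>j\<in>prim n. 1 - zeta n j)"
proof -
  have "Lp n = (\<Prod>j\<in>prim n. 1 - zeta n j)" unfolding Lp_def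
  proof (intro prod.cong refl)
    fix j assume j: "j \<in> prim n"
    have "zeta n j \<noteq> 1" using prim_lt[OF j assms] by (intro zeta_ne_1)
    thus "f1 (zeta n j) = 1 - zeta n j" by (simp add: f1_def)
  qed
  moreover have "1 \<le> cmod (Lp n)"
    using assms Lp_nz[of n] Lp_ln[of n] mangoldt_nonneg[of n] by (intro exp_ln_cmod) auto
  ultimately show ?thesis by simp
qed

lemma M_ge1: assumes "n \<ge> 3" shows "1 \<le> cmod (\<Prod>j\<in>prim n. 1 + zeta n j)"
proof -
  have "Mp n = (\<Prod>j\<in>prim n. 1 + zeta n j)" unfolding Mp_def
  proof (intro prod.cong refl)
    fix j assume j: "j \<in> prim n"
    have jl: "0 < j" "j < n" using prim_lt[OF j] assms by auto
    have "zeta n j \<noteq> -1"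
    proof
      assume "zeta n j = -1"
      hence nj: "n = 2 * j" using jl by (intro zeta_neg1) auto
      have "coprime j (2 * j)" using j nj unfolding prim_def by auto
      hence "coprime j j" using coprime_mult_right_iff by blast
      hence "j = 1" by simp
      with nj assms show False by simp
    qed
    thus "f2 (zeta n j) = 1 + zeta n j" by (simp add: f2_def)
  qed
  moreover have "0 \<le> Gm n" using assms by (simp add: Gm_def mangoldt_nonneg)
  hence "1 \<le> cmod (Mp n)"
    using assms Mp_nz[of n] Mp_ln[of n] by (intro exp_ln_cmod) auto
  ultimately show ?thesis by simp
qed



lemma sqnorm: "(cmod (complex_of_real a - cis t * complex_of_real b))\<^sup>2 = a\<^sup>2 + b\<^sup>2 - 2 * a * b * cos t"
proof -
  have "(cmod (complex_of_real a - cis t * complex_of_real b))\<^sup>2 = (a - b * cos t)\<^sup>2 + (b * sin t)\<^sup>2"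
    by (simp add: cmod_power2 mult.commute)
  also have s: "sin t * sin t = 1 - cos t * cos t" using sin_squared_eq[of t] by (simp add: power2_eq_square)
  have "(a - b * cos t)\<^sup>2 + (b * sin t)\<^sup>2 = a\<^sup>2 + b\<^sup>2 - 2 * a * b * cos t"
    by (simp add: power2_eq_square algebra_simps s)
  finally show ?thesis .
qed

lemma key7:
  fixes p q :: int assumes "0 \<le> q" "q \<le> p" "3 \<le> p"
  shows "7 \<le> p * p - p * q + q * q"
proof -
  consider "q = 0" | "q = 1" | "q = 2" | "q \<ge> 3" using assms by linarith
  thus ?thesis
  proof cases
    case 1 thus ?thesis using assms mult_mono[of 3 p 3 p] by simp
  next
    case 2
    have "p * (p - 1) \<ge> 3 * 2" using assms by (intro mult_mono) auto
    thus ?thesis using 2 by (simp add: algebra_simps)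
  next
    case 3
    have "p * (p - 2) \<ge> 3 * 1" using assms by (intro mult_mono) auto
    thus ?thesis using 3 by (simp add: algebra_simps)
  next
    case 4
    have "p * q \<ge> 3 * 3" using assms 4 by (intro mult_mono) auto
    moreover have "(p - q) * (p - q) \<ge> 0" by simp
    ultimately show ?thesis by (simp add: algebra_simps)
  qed
qed

lemma key7':
  fixes x y :: int assumes "max \<bar>x\<bar> \<bar>y\<bar> \<ge> 3"
  shows "7 \<le> x * x - \<bar>x\<bar> * \<bar>y\<bar> + y * y"
proof (cases "\<bar>y\<bar> \<le> \<bar>x\<bar>")
  case True
  have "7 \<le> \<bar>x\<bar> * \<bar>x\<bar> - \<bar>x\<bar> * \<bar>y\<bar> + \<bar>y\<bar> * \<bar>y\<bar>" using True assms by (intro key7) auto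
  thus ?thesis by (simp add: abs_mult_self_eq)
next
  case False
  have "7 \<le> \<bar>y\<bar> * \<bar>y\<bar> - \<bar>y\<bar> * \<bar>x\<bar> + \<bar>x\<bar> * \<bar>x\<bar>" using False assms by (intro key7) auto
  thus ?thesis by (simp add: abs_mult_self_eq algebra_simps)
qed

lemma zeta_cis: "zeta n k = cis (2 * pi * real k / real n)" by (simp add: zeta_def)

lemma main_bound:
  fixes a b :: real
  assumes n: "n \<ge> 3"
  shows "(a\<^sup>2 - \<bar>a * b\<bar> + b\<^sup>2) ^ card (S n) \<le> (\<Prod>k\<in>S n. (cmod (of_real a - zeta n k * of_real b))\<^sup>2)
        \<or> a\<^sup>2 - \<bar>a * b\<bar> + b\<^sup>2 \<le> 0"
proof (cases "a\<^sup>2 - \<bar>a * b\<bar> + b\<^sup>2 \<le> 0")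
  case pos: False
  define e :: real where "e = (if a * b \<ge> 0 then 1 else -1)"
  define A where "A = (a - e * b)\<^sup>2"
  define B where "B = \<bar>a * b\<bar>"
  define u where "u k = (cmod (of_real 1 - zeta n k * of_real e))\<^sup>2" for k
  have e2: "e * e = 1" by (simp add: e_def)
  have ecases: "e = 1 \<or> e = -1" by (simp add: e_def)
  have eB: "e * (a * b) = B" by (simp add: e_def B_def)
  have AB: "A + B = a\<^sup>2 - \<bar>a * b\<bar> + b\<^sup>2"
    unfolding A_def B_def using ecases eB[unfolded B_def] by (auto simp: power2_eq_square algebra_simps)
  have fac: "(cmod (of_real a - zeta n k * of_real b))\<^sup>2 = A + B * u k" for k
  proof -
    have h1: "(cmod (of_real a - zeta n k * of_real b))\<^sup>2 = a\<^sup>2 + b\<^sup>2 - 2 * a * b * cos (2 * pi * real k / real n)"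
      unfolding zeta_cis by (rule sqnorm)
    have h2: "u k = 1 + e\<^sup>2 - 2 * e * cos (2 * pi * real k / real n)"
      unfolding u_def zeta_cis using sqnorm[of 1 _ e] by simp
    show ?thesis
      unfolding A_def eB[symmetric] h1 h2 using ecases
      by (auto simp: power2_eq_square algebra_simps)
  qed
  have produ: "prod u (S n) \<ge> 1"
  proof -
    have "of_real (prod u (S n)) = (\<Prod>k\<in>prim n. of_real 1 - zeta n k * of_real e)"
      unfolding u_def by (rule pair_prod[OF n, symmetric])
    hence "prod u (S n) = cmod (\<Prod>k\<in>prim n. of_real 1 - zeta n k * of_real e)"
    proof -
      have "prod u (S n) \<ge> 0" unfolding u_def by (intro prod_nonneg) auto
      hence "cmod (complex_of_real (prod u (S n))) = prod u (S n)" by (metis norm_of_real abs_of_nonneg)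
      thus ?thesis using \<open>of_real (prod u (S n)) = _\<close> by metis
    qed
    also have "\<dots> \<ge> 1"
    proof (cases "e = 1")
      case True thus ?thesis using L_ge1[of n] n by simp
    next
      case False hence "e = -1" by (simp add: e_def split: if_splits)
      thus ?thesis using M_ge1[of n] n by simp
    qed
    finally show ?thesis .
  qed
  have upos: "u k > 0" if "k \<in> S n" for k
  proof (rule ccontr)
    assume "\<not> u k > 0"
    hence "u k = 0" unfolding u_def using zero_le_power2 by (metis less_eq_real_def)
    hence "prod u (S n) = 0" using that by (intro prod_zero) auto
    with produ show False by simp
  qed
  have "(A + B) ^ card (S n) \<le> (\<Prod>k\<in>S n. A + B * u k)"
    using pos AB upos produ by (intro prod_lower) (auto simp: A_def B_def)
  thus ?thesis using fac AB by simp
qed simp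


theorem mainTheorem3:
  fixes n :: nat and x y :: int
  assumes "n \<ge> 3"
    and "max \<bar>x\<bar> \<bar>y\<bar> \<ge> 2"
    and "Re (cyclotomic_form n (of_int x) (of_int y)) < 7 powr (real (totient n) / 2)"
  shows "max \<bar>x\<bar> \<bar>y\<bar> = 2"
proof (rule ccontr)
  assume "max \<bar>x\<bar> \<bar>y\<bar> \<noteq> 2"
  hence m3: "max \<bar>x\<bar> \<bar>y\<bar> \<ge> 3" using assms(2) by linarith
  define a where "a = real_of_int x"
  define b where "b = real_of_int y"
  have ox: "(of_int x :: complex) = of_real a" unfolding a_def by simp
  have oy: "(of_int y :: complex) = of_real b" unfolding b_def by simp
  define P where "P = (\<Prod>k\<in>S n. (cmod (of_real a - zeta n k * of_real b))\<^sup>2)"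
  have "cyclotomic_form n (of_int x) (of_int y) = of_real P"
    unfolding form_prod ox oy P_def by (rule pair_prod[OF assms(1)])
  hence ReP: "Re (cyclotomic_form n (of_int x) (of_int y)) = P" by simp
  have "7 \<le> real_of_int (x * x - \<bar>x\<bar> * \<bar>y\<bar> + y * y)" using key7'[OF m3] by linarith
  hence k7: "7 \<le> a\<^sup>2 - \<bar>a * b\<bar> + b\<^sup>2" unfolding a_def b_def by (simp add: power2_eq_square abs_mult)
  have "(a\<^sup>2 - \<bar>a * b\<bar> + b\<^sup>2) ^ card (S n) \<le> P"
    using main_bound[OF assms(1), of a b] k7 unfolding P_def by auto
  moreover have "7 ^ card (S n) \<le> (a\<^sup>2 - \<bar>a * b\<bar> + b\<^sup>2) ^ card (S n)"
    using k7 by (intro power_mono) auto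
  moreover have "7 powr (real (totient n) / 2) = 7 ^ card (S n)"
    using card_S[OF assms(1)] by (simp add: powr_realpow)
  ultimately show False using assms(3) ReP by simp
qed


end
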